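(* Let $C>0$. Consider four sites $s\in\{1,2,3,4\}$ with scalar covariates $X_s=s$. The experimental sites are $\mathcal{S}_E=\{1,4\}$, the policy sites are $\mathcal{S}_P=\{2,3\}$, and at most $k=1$ site may be sampled, so the feasible sampling sets are $\mathcal{A}(1)=\{\emptyset,\{1\},\{4\}\}$. Let $\Theta$ be the set of vectors $(\tau_1,\tau_2,\tau_3,\tau_4)\in\mathbb{R}^4$ with $|\tau_s-\tau_t|\le C|s-t|$ for all $s,t$; equivalently, $\tau_s=\tau(s)$ for some $C$-Lipschitz $\tau:\mathbb{R}\to\mathbb{R}$. Signals are noiseless: if $\mathscr{S}$ is sampled, the policy maker observes exactly $(\tau_s)_{s\in\mathscr{S}}$. A treatment rule for $\mathscr{S}$ is a measurable map $T^{\mathscr{S}}$ from the observations to actions $(a_2,a_3)\in[0,1]^2$. The regret of actions $(a_2,a_3)$ is $\frac12\sum_{s\in\{2,3\}}\tau_s(\mathbf{1}\{\tau_s\ge0\}-a_s)$. A randomized design consists of a probability distribution $p$ on $\mathcal{A}(1)$ together with a treatment rule $T^{\mathscr{S}}$ for each $\mathscr{S}\in\mathcal{A}(1)$. Its worst-case regret is the supremum over $\tau\in\Theta$ of the $p$-expected regret; here the parameter $\tau$ is fixed before the sampled set is drawn. A purposive design is a randomized design in which $p$ is a point mass. Then: (1) the infimum of worst-case regret over all randomized designs equals $C/2$, and it is attained; (2) the infimum of worst-case regret over all purposive designs equals $3C/4$, and it is attained.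
   Context: This is a stylized example comparing randomized and purposive (nonrandom) selection of experimental sites under minimax regret. The adversarial parameter is chosen before the randomization over sampling sets is realized, and it is the same for all realizations of the sampled set. *)

theory Defs
  imports "HOL-Probability.Probability"
begin

definition sites :: "nat set" where "sites = {1,2,3,4}"

definition Theta :: "real \<Rightarrow> (nat \<Rightarrow> real) set" where
  "Theta C = {\<tau>. (\<forall>s\<in>sites. \<forall>t\<in>sites. \<bar>\<tau> s - \<tau> t\<bar> \<le> C * \<bar>real s - real t\<bar>)
                 \<and> (\<forall>s. s \<notin> sites \<longrightarrow> \<tau> s = 0)}"

definition feasible_sets :: "nat set set" where
  "feasible_sets = {{}, {1}, {4}}"

definition obs :: "nat set \<Rightarrow> (nat \<Rightarrow> real) \<Rightarrow> (nat \<Rightarrow> real)" where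
  "obs S \<tau> = restrict \<tau> S"

definition obs_space :: "nat set \<Rightarrow> (nat \<Rightarrow> real) measure" where
  "obs_space S = PiM S (\<lambda>_. borel)"

definition regret :: "(nat \<Rightarrow> real) \<Rightarrow> real \<times> real \<Rightarrow> real" where
  "regret \<tau> a = 1/2 * (\<tau> 2 * ((if \<tau> 2 \<ge> 0 then 1 else 0) - fst a)
                      + \<tau> 3 * ((if \<tau> 3 \<ge> 0 then 1 else 0) - snd a))"

type_synonym design = "nat set pmf \<times> (nat set \<Rightarrow> (nat \<Rightarrow> real) \<Rightarrow> real \<times> real)"

definition treatment_rule :: "nat set \<Rightarrow> ((nat \<Rightarrow> real) \<Rightarrow> real \<times> real) \<Rightarrow> bool" where
  "treatment_rule S T \<longleftrightarrow> T \<in> obs_space S \<rightarrow>\<^sub>M borel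
     \<and> (\<forall>x\<in>space (obs_space S). T x \<in> {0..1} \<times> {0..1})"

definition randomized_designs :: "design set" where
  "randomized_designs = {(p, T). set_pmf p \<subseteq> feasible_sets
       \<and> (\<forall>S\<in>feasible_sets. treatment_rule S (T S))}"

definition purposive_designs :: "design set" where
  "purposive_designs = {(p, T). (p, T) \<in> randomized_designs
       \<and> (\<exists>S\<in>feasible_sets. p = return_pmf S)}"

definition worst_case_regret :: "real \<Rightarrow> design \<Rightarrow> ereal" where
  "worst_case_regret C d = (SUP \<tau>\<in>Theta C.
     ereal (measure_pmf.expectation (fst d) (\<lambda>S. regret \<tau> (snd d S (obs S \<tau>)))))"

end

theory Submission
  imports Defs
begin


definition clip :: "real \<Rightarrow> real" where "clip x = max 0 (min 1 x)"

lemma single_site: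
  fixes t ob d :: real
  assumes d: "d > 0" and h: "\<bar>t - ob\<bar> \<le> d"
  shows "t * ((if t \<ge> 0 then 1 else 0) - clip (1/2 + ob/(2*d))) \<le> d / 2"
proof (cases "t \<ge> 0")
  case True
  show ?thesis
  proof (cases "t \<ge> 2*d")
    case True
    then have "1/2 + ob/(2*d) \<ge> 1" using h d by (simp add: field_simps)
    then show ?thesis using True d by (simp add: clip_def)
  next
    case False
    have "1/2 + ob/(2*d) \<ge> t/(2*d)" using h d by (simp add: field_simps)
    then have c: "clip (1/2 + ob/(2*d)) \<ge> t/(2*d)" using False \<open>t\<ge>0\<close> d
      by (auto simp: clip_def field_simps)
    have "t * (1 - clip (1/2 + ob/(2*d))) \<le> t * (1 - t/(2*d))"
      using c \<open>t\<ge>0\<close> by (intro mult_left_mono) auto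
    also have "\<dots> \<le> d/2"
    proof -
      have "0 \<le> (t - d)^2" by simp
      then show ?thesis using d by (simp add: field_simps power2_eq_square)
    qed
    finally show ?thesis using \<open>t\<ge>0\<close> by simp
  qed
next
  case False
  show ?thesis
  proof (cases "t \<le> -2*d")
    case True
    then have "1/2 + ob/(2*d) \<le> 0" using h d by (simp add: field_simps)
    then show ?thesis using True d by (simp add: clip_def)
  next
    case c2: False
    have "ob/(2*d) \<le> (t+d)/(2*d)" using h d by (intro divide_right_mono) auto
    then have "1/2 + ob/(2*d) \<le> 1 + t/(2*d)" using d by (simp add: add_divide_distrib)
    moreover have w0: "0 \<le> 1 + t/(2*d)" using c2 d by (simp add: field_simps)
    ultimately have c: "clip (1/2 + ob/(2*d)) \<le> 1 + t/(2*d)"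
      unfolding clip_def by linarith
    have "(-t) * clip (1/2 + ob/(2*d)) \<le> (-t) * (1 + t/(2*d))"
      using c False by (intro mult_left_mono) auto
    also have "\<dots> \<le> d/2"
    proof -
      have "0 \<le> (t + d)^2" by simp
      then show ?thesis using d by (simp add: field_simps power2_eq_square)
    qed
    finally show ?thesis using False by simp
  qed
qed



lemma same_sign_aux:
  fixes x y p q C :: real
  assumes C: "C > 0" and x: "x > 2*C" and y: "y \<ge> 0" and y2: "y < 2*C" and xy: "\<bar>x - y\<bar> \<le> C"
    and p0: "p = 0"
    and q: "0 \<le> q" "q \<le> 1 - y/(2*C)"
  shows "(x + y) * (p + q) \<le> 2 * C"
proof -
  have "(x + y) * (p + q) \<le> (2*y + C) * (1 - y/(2*C))"
    using p0 q xy x y C by (intro mult_mono) auto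
  also have "\<dots> = C + (3/2)*y - (y*y)/C" using C by (simp add: field_simps)
  also have "\<dots> \<le> 2*C"
  proof -
    have yC: "y \<ge> C" using x xy by linarith
    have "C * y \<le> y * y" using yC C by (intro mult_right_mono) auto
    then have "y \<le> (y*y)/C" using C by (simp add: field_simps)
    then show ?thesis using y2 by linarith
  qed
  finally show ?thesis .
qed

lemma same_sign:
  fixes x y p q C :: real
  assumes C: "C > 0" and x: "x \<ge> 0" and y: "y \<ge> 0" and xy: "\<bar>x - y\<bar> \<le> C"
    and p: "0 \<le> p" "p \<le> 1" "p \<le> max 0 (1 - x/(2*C))"
    and q: "0 \<le> q" "q \<le> 1" "q \<le> max 0 (1 - y/(2*C))"
  shows "(x + y) * (p + q) \<le> 2 * C"
proof (cases "x \<le> 2*C \<and> y \<le> 2*C")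
  case True
  have "x/(2*C) \<le> 1" "y/(2*C) \<le> 1" using True C by (auto simp: field_simps)
  then have p': "p \<le> 1 - x/(2*C)" and q': "q \<le> 1 - y/(2*C)"
    using p q by auto
  have "(x + y) * (p + q) \<le> (x + y) * (2 - (x+y)/(2*C))"
    using p' q' x y by (intro mult_left_mono) (auto simp: add_divide_distrib)
  also have "\<dots> = 2*C - (x + y - 2*C)^2 / (2*C)"
    using C by (simp add: field_simps power2_eq_square)
  also have "\<dots> \<le> 2 * C"
    using C by simp
  finally show ?thesis .
next
  case False
  have hx: "x > 2*C \<Longrightarrow> p = 0"
  proof -
    assume "x > 2*C" then have "x/(2*C) > 1" using C by (simp add: field_simps)
    then show "p = 0" using p by auto
  qed
  have hy: "y > 2*C \<Longrightarrow> q = 0"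
  proof -
    assume "y > 2*C" then have "y/(2*C) > 1" using C by (simp add: field_simps)
    then show "q = 0" using q by auto
  qed
  have hx': "x < 2*C \<Longrightarrow> p \<le> 1 - x/(2*C)"
  proof -
    assume "x < 2*C" then have "x/(2*C) < 1" using C by (simp add: field_simps)
    then show ?thesis using p by auto
  qed
  have hy': "y < 2*C \<Longrightarrow> q \<le> 1 - y/(2*C)"
  proof -
    assume "y < 2*C" then have "y/(2*C) < 1" using C by (simp add: field_simps)
    then show ?thesis using q by auto
  qed
  consider "x > 2*C" "y \<ge> 2*C" | "x > 2*C" "y < 2*C" | "y > 2*C" "x \<ge> 2*C" | "y > 2*C" "x < 2*C"
    using False by linarith
  then show ?thesis
  proof cases
    case 1
    have "q = 0"
    proof (cases "y = 2*C")
      case True then show ?thesis using q C by auto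
    qed (use 1 hy in auto)
    then show ?thesis using hx 1 C by simp
  next
    case 2
    show ?thesis using same_sign_aux[OF C 2(1) y 2(2) xy hx[OF 2(1)] q(1) hy'[OF 2(2)]] .
  next
    case 3
    have "p = 0"
    proof (cases "x = 2*C")
      case True then show ?thesis using p C by auto
    qed (use 3 hx in auto)
    then show ?thesis using hy 3 C by simp
  next
    case 4
    have xy': "\<bar>y - x\<bar> \<le> C" using xy by linarith
    have "(y + x) * (q + p) \<le> 2*C"
      using same_sign_aux[OF C 4(1) x 4(2) xy' hy[OF 4(1)] p(1) hx'[OF 4(2)]] .
    then show ?thesis by (simp add: add.commute)
  qed
qed


lemma mixed:
  fixes a b w C :: real
  assumes "a \<ge> 0" "b \<ge> 0" "a + b \<le> C" "0 \<le> w" "w \<le> 2"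
  shows "a * (2 - w) + b * w \<le> 2 * C"
proof -
  have "a * (2 - w) \<le> (a+b) * (2 - w)" using assms by (intro mult_right_mono) auto
  moreover have "b * w \<le> (a+b) * w" using assms by (intro mult_right_mono) auto
  ultimately have "a * (2 - w) + b * w \<le> (a+b) * (2-w) + (a+b)*w" by linarith
  also have "\<dots> = 2*(a+b)" by (simp add: algebra_simps)
  also have "\<dots> \<le> 2*C" using assms by simp
  finally show ?thesis .
qed

lemma clip_01: "0 \<le> clip z" "clip z \<le> 1" by (auto simp: clip_def)

definition R :: "real \<Rightarrow> real \<Rightarrow> real" where
  "R t a = t * ((if t \<ge> 0 then 1 else 0) - a)"

lemma key:
  fixes C m t2 t3 n :: real
  assumes C: "C > 0" and h1: "\<bar>t2 - m\<bar> \<le> C" and h2: "\<bar>t3 - t2\<bar> \<le> C" and h3: "\<bar>n - t3\<bar> \<le> C"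
  defines "u \<equiv> clip (1/2 + m/(2*C))" and "v \<equiv> clip (1/2 + n/(2*C))"
  shows "R t2 u + R t3 u + R t2 v + R t3 v \<le> 2 * C"
proof -
  have u01: "0 \<le> u" "u \<le> 1" and v01: "0 \<le> v" "v \<le> 1" unfolding u_def v_def by (rule clip_01)+
  have mlo: "m/(2*C) \<ge> (t2 - C)/(2*C)" using h1 C by (intro divide_right_mono) auto
  have mhi: "m/(2*C) \<le> (t2 + C)/(2*C)" using h1 C by (intro divide_right_mono) auto
  have nlo: "n/(2*C) \<ge> (t3 - C)/(2*C)" using h3 C by (intro divide_right_mono) auto
  have nhi: "n/(2*C) \<le> (t3 + C)/(2*C)" using h3 C by (intro divide_right_mono) auto
  have e1: "(t2 - C)/(2*C) = t2/(2*C) - 1/2" "(t2 + C)/(2*C) = t2/(2*C) + 1/2"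
     "(t3 - C)/(2*C) = t3/(2*C) - 1/2" "(t3 + C)/(2*C) = t3/(2*C) + 1/2"
    using C by (simp_all add: field_simps)
  consider "t2 \<ge> 0" "t3 \<ge> 0" | "t2 < 0" "t3 < 0" | "t2 \<ge> 0" "t3 < 0" | "t2 < 0" "t3 \<ge> 0" by linarith
  then show ?thesis
  proof cases
    case 1
    have p: "1 - u \<le> max 0 (1 - t2/(2*C))" unfolding u_def clip_def using mlo e1 by linarith
    have q: "1 - v \<le> max 0 (1 - t3/(2*C))" unfolding v_def clip_def using nlo e1 by linarith
    have "(t2 + t3) * ((1-u) + (1-v)) \<le> 2*C"
      by (rule same_sign[OF C 1(1) 1(2) _ _ _ p _ _ q]) (use h2 u01 v01 in auto)
    then show ?thesis using 1 by (simp add: R_def algebra_simps)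
  next
    case 2
    have p: "u \<le> max 0 (1 - (-t2)/(2*C))" unfolding u_def clip_def using mhi e1 by linarith
    have q: "v \<le> max 0 (1 - (-t3)/(2*C))" unfolding v_def clip_def using nhi e1 by linarith
    have "((-t2) + (-t3)) * (u + v) \<le> 2*C"
      by (rule same_sign[OF C _ _ _ _ _ p _ _ q]) (use 2 h2 u01 v01 in auto)
    then show ?thesis using 2 by (simp add: R_def algebra_simps)
  next
    case 3
    have "t2 * (2 - (u+v)) + (-t3) * (u+v) \<le> 2*C"
      by (rule mixed) (use 3 h2 u01 v01 in auto)
    then show ?thesis using 3 by (simp add: R_def algebra_simps)
  next
    case 4
    have "t3 * (2 - (u+v)) + (-t2) * (u+v) \<le> 2*C"
      by (rule mixed) (use 4 h2 u01 v01 in auto)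
    then show ?thesis using 4 by (simp add: R_def algebra_simps)
  qed
qed

lemma clip_meas[measurable]:
  "clip \<in> borel_measurable borel"
  unfolding clip_def by measurable

lemma pair_meas:
  fixes g h :: "(nat \<Rightarrow> real) \<Rightarrow> real"
  assumes "g \<in> borel_measurable M" "h \<in> borel_measurable M"
  shows "(\<lambda>x. (g x, h x)) \<in> M \<rightarrow>\<^sub>M (borel :: (real \<times> real) measure)"
proof -
  have "(\<lambda>x. (g x, h x)) \<in> M \<rightarrow>\<^sub>M (borel \<Otimes>\<^sub>M borel)"
    using assms by (rule measurable_Pair)
  then show ?thesis by (simp add: borel_prod)
qed

lemma comp_meas:
  assumes "i \<in> S"
  shows "(\<lambda>x. clip (1/2 + x i / (2*d))) \<in> borel_measurable (obs_space S)"
  unfolding obs_space_def using assms by measurable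

lemma const_rule: "treatment_rule S (\<lambda>x. (1/2, 1/2))"
  unfolding treatment_rule_def by auto

lemma comp_rule:
  assumes "i \<in> S"
  shows "treatment_rule S (\<lambda>x. (clip (1/2 + x i / (2*d)), clip (1/2 + x i / (2*e))))"
  unfolding treatment_rule_def
  using pair_meas[OF comp_meas[OF assms] comp_meas[OF assms]] by (auto simp: clip_01)

definition Trand :: "real \<Rightarrow> nat set \<Rightarrow> (nat \<Rightarrow> real) \<Rightarrow> real \<times> real" where
  "Trand C S x = (if S = {1} then (clip (1/2 + x 1 / (2*C)), clip (1/2 + x 1 / (2*C)))
                  else if S = {4} then (clip (1/2 + x 4 / (2*C)), clip (1/2 + x 4 / (2*C)))
                  else (1/2, 1/2))"

definition Tpurp :: "real \<Rightarrow> nat set \<Rightarrow> (nat \<Rightarrow> real) \<Rightarrow> real \<times> real" where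
  "Tpurp C S x = (if S = {1} then (clip (1/2 + x 1 / (2*C)), clip (1/2 + x 1 / (2*(2*C))))
                  else (1/2, 1/2))"

lemma Trand_rule: "S \<in> feasible_sets \<Longrightarrow> treatment_rule S (Trand C S)"
  unfolding feasible_sets_def
proof (elim insertE emptyE)
  assume "S = {}" then show ?thesis using const_rule[of "{}"]
    by (simp add: Trand_def[abs_def])
next
  assume "S = {1}" then show ?thesis using comp_rule[of 1 "{1}" C C]
    by (simp add: Trand_def[abs_def])
next
  assume "S = {4}" then show ?thesis using comp_rule[of 4 "{4}" C C]
    by (simp add: Trand_def[abs_def])
qed

lemma Tpurp_rule: "S \<in> feasible_sets \<Longrightarrow> treatment_rule S (Tpurp C S)"
  unfolding feasible_sets_def
proof (elim insertE emptyE)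
  assume "S = {}" then show ?thesis using const_rule[of "{}"]
    by (simp add: Tpurp_def[abs_def])
next
  assume "S = {1}" then show ?thesis using comp_rule[of 1 "{1}" C "2*C"]
    by (simp add: Tpurp_def[abs_def])
next
  assume "S = {4}" then show ?thesis using const_rule[of "{4}"]
    by (simp add: Tpurp_def[abs_def])
qed

lemma drand_in: "(pmf_of_set {{1},{4}}, Trand C) \<in> randomized_designs"
  unfolding randomized_designs_def using Trand_rule
  by (auto simp: feasible_sets_def)

lemma dpurp_in: "(return_pmf {1}, Tpurp C) \<in> purposive_designs"
  unfolding purposive_designs_def randomized_designs_def using Tpurp_rule
  by (auto simp: feasible_sets_def)

lemma Theta_D:
  assumes "\<tau> \<in> Theta C" "s \<in> sites" "t \<in> sites"
  shows "\<bar>\<tau> s - \<tau> t\<bar> \<le> C * \<bar>real s - real t\<bar>"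
  using assms unfolding Theta_def by blast

lemma regret_R: "regret \<tau> a = 1/2 * (R (\<tau> 2) (fst a) + R (\<tau> 3) (snd a))"
  unfolding regret_def R_def by simp

lemma obs_at: "i \<in> S \<Longrightarrow> obs S \<tau> i = \<tau> i"
  unfolding obs_def by simp



lemma worst_rand_le:
  assumes C: "C > 0"
  shows "worst_case_regret C (pmf_of_set {{1},{4}}, Trand C) \<le> ereal (C/2)"
  unfolding worst_case_regret_def
proof (rule SUP_least)
  fix \<tau> assume t: "\<tau> \<in> Theta C"
  have h1: "\<bar>\<tau> 2 - \<tau> 1\<bar> \<le> C" using Theta_D[OF t, of 2 1] by (simp add: sites_def)
  have h2: "\<bar>\<tau> 3 - \<tau> 2\<bar> \<le> C" using Theta_D[OF t, of 3 2] by (simp add: sites_def)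
  have h3: "\<bar>\<tau> 4 - \<tau> 3\<bar> \<le> C" using Theta_D[OF t, of 4 3] by (simp add: sites_def)
  have k: "R (\<tau> 2) (clip (1/2 + \<tau> 1/(2*C))) + R (\<tau> 3) (clip (1/2 + \<tau> 1/(2*C)))
         + R (\<tau> 2) (clip (1/2 + \<tau> 4/(2*C))) + R (\<tau> 3) (clip (1/2 + \<tau> 4/(2*C))) \<le> 2 * C"
    by (rule key[OF C h1 h2 h3])
  have e: "measure_pmf.expectation (pmf_of_set {{1::nat},{4}}) (\<lambda>S. regret \<tau> (Trand C S (obs S \<tau>)))
     = (regret \<tau> (Trand C {1} (obs {1} \<tau>)) + regret \<tau> (Trand C {4} (obs {4} \<tau>))) / 2"
    by (subst integral_pmf_of_set) auto
  have "(regret \<tau> (Trand C {1} (obs {1} \<tau>)) + regret \<tau> (Trand C {4} (obs {4} \<tau>))) / 2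
     = (R (\<tau> 2) (clip (1/2 + \<tau> 1/(2*C))) + R (\<tau> 3) (clip (1/2 + \<tau> 1/(2*C)))
         + R (\<tau> 2) (clip (1/2 + \<tau> 4/(2*C))) + R (\<tau> 3) (clip (1/2 + \<tau> 4/(2*C)))) / 4"
    by (simp add: Trand_def regret_R obs_at field_simps)
  also have "\<dots> \<le> C/2" using k by simp
  finally show "ereal (measure_pmf.expectation (fst (pmf_of_set {{1},{4}}, Trand C))
          (\<lambda>S. regret \<tau> (snd (pmf_of_set {{1},{4}}, Trand C) S (obs S \<tau>)))) \<le> ereal (C/2)"
    using e by simp
qed

lemma worst_purp_le:
  assumes C: "C > 0"
  shows "worst_case_regret C (return_pmf {1}, Tpurp C) \<le> ereal (3*C/4)"
  unfolding worst_case_regret_def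
proof (rule SUP_least)
  fix \<tau> assume t: "\<tau> \<in> Theta C"
  have h1: "\<bar>\<tau> 2 - \<tau> 1\<bar> \<le> C" using Theta_D[OF t, of 2 1] by (simp add: sites_def)
  have h2: "\<bar>\<tau> 3 - \<tau> 1\<bar> \<le> 2*C" using Theta_D[OF t, of 3 1] by (simp add: sites_def)
  have a: "R (\<tau> 2) (clip (1/2 + \<tau> 1/(2*C))) \<le> C/2"
    using single_site[OF C h1] by (simp add: R_def)
  have C2: "2*C > 0" using C by simp
  have b: "R (\<tau> 3) (clip (1/2 + \<tau> 1/(2*(2*C)))) \<le> 2*C/2"
    using single_site[OF C2 h2] by (simp add: R_def)
  have "regret \<tau> (Tpurp C {1} (obs {1} \<tau>)) \<le> 3*C/4"
    using a b by (simp add: Tpurp_def regret_R obs_at)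
  then show "ereal (measure_pmf.expectation (fst (return_pmf {1}, Tpurp C))
          (\<lambda>S. regret \<tau> (snd (return_pmf {1}, Tpurp C) S (obs S \<tau>)))) \<le> ereal (3*C/4)"
    by simp
qed

lemma worst_ge:
  assumes "a \<in> Theta C" "b \<in> Theta C"
    and "measure_pmf.expectation (fst d) (\<lambda>S. regret a (snd d S (obs S a)))
       + measure_pmf.expectation (fst d) (\<lambda>S. regret b (snd d S (obs S b))) \<ge> 2 * v"
  shows "ereal v \<le> worst_case_regret C d"
proof -
  let ?Ea = "measure_pmf.expectation (fst d) (\<lambda>S. regret a (snd d S (obs S a)))"
  let ?Eb = "measure_pmf.expectation (fst d) (\<lambda>S. regret b (snd d S (obs S b)))"
  have A: "ereal ?Ea \<le> worst_case_regret C d"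
    unfolding worst_case_regret_def using assms(1) by (rule SUP_upper2) simp
  have B: "ereal ?Eb \<le> worst_case_regret C d"
    unfolding worst_case_regret_def using assms(2) by (rule SUP_upper2) simp
  show ?thesis
  proof (cases "?Ea \<ge> v")
    case True then have "ereal v \<le> ereal ?Ea" by simp
    then show ?thesis using A by (rule order_trans)
  next
    case False then have "?Eb \<ge> v" using assms(3) by linarith
    then have "ereal v \<le> ereal ?Eb" by simp
    then show ?thesis using B by (rule order_trans)
  qed
qed

definition tp :: "real \<Rightarrow> nat \<Rightarrow> real" where "tp C s = (if s = 2 \<or> s = 3 then C else 0)"
definition tm :: "real \<Rightarrow> nat \<Rightarrow> real" where "tm C s = (if s = 2 \<or> s = 3 then -C else 0)"

lemma tp_Theta: "C > 0 \<Longrightarrow> tp C \<in> Theta C"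
  unfolding Theta_def tp_def sites_def by auto
lemma tm_Theta: "C > 0 \<Longrightarrow> tm C \<in> Theta C"
  unfolding Theta_def tm_def sites_def by auto

lemma obs_eq: "S \<in> feasible_sets \<Longrightarrow> (\<And>i. i \<in> S \<Longrightarrow> f i = g i) \<Longrightarrow> obs S f = obs S g"
  unfolding obs_def by (auto simp: fun_eq_iff)

lemma rand_ge:
  assumes C: "C > 0" and d: "d \<in> randomized_designs"
  shows "ereal (C/2) \<le> worst_case_regret C d"
proof -
  obtain p T where dpt: "d = (p, T)" by (cases d)
  have sp: "set_pmf p \<subseteq> feasible_sets" using d dpt by (auto simp: randomized_designs_def)
  have fin: "finite feasible_sets" by (simp add: feasible_sets_def)
  have each: "regret (tp C) (T S (obs S (tp C))) + regret (tm C) (T S (obs S (tm C))) = C"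
    if S: "S \<in> feasible_sets" for S
  proof -
    have "obs S (tm C) = obs S (tp C)"
      by (rule obs_eq[OF S]) (use S in \<open>auto simp: feasible_sets_def tp_def tm_def\<close>)
    then show ?thesis using C by (simp add: regret_def tp_def tm_def algebra_simps)
  qed
  have "measure_pmf.expectation p (\<lambda>S. regret (tp C) (T S (obs S (tp C))))
      + measure_pmf.expectation p (\<lambda>S. regret (tm C) (T S (obs S (tm C))))
    = (\<Sum>S\<in>feasible_sets. regret (tp C) (T S (obs S (tp C))) * pmf p S)
      + (\<Sum>S\<in>feasible_sets. regret (tm C) (T S (obs S (tm C))) * pmf p S)"
    using sp fin by (simp add: integral_measure_pmf_real[of feasible_sets] subset_iff)
  also have "\<dots> = (\<Sum>S\<in>feasible_sets. C * pmf p S)"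
    by (subst sum.distrib[symmetric], rule sum.cong) (auto simp: each distrib_right[symmetric])
  also have "\<dots> = C" using sum_pmf_eq_1[OF fin sp] by (simp add: sum_distrib_left[symmetric])
  finally have "measure_pmf.expectation (fst d) (\<lambda>S. regret (tp C) (snd d S (obs S (tp C))))
      + measure_pmf.expectation (fst d) (\<lambda>S. regret (tm C) (snd d S (obs S (tm C)))) \<ge> 2 * (C/2)"
    using dpt by simp
  then show ?thesis by (rule worst_ge[OF tp_Theta[OF C] tm_Theta[OF C]])
qed

definition up1 :: "real \<Rightarrow> nat \<Rightarrow> real" where "up1 C s = (if s \<in> sites then C * (real s - 1) else 0)"
definition dn1 :: "real \<Rightarrow> nat \<Rightarrow> real" where "dn1 C s = (if s \<in> sites then - C * (real s - 1) else 0)"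
definition up4 :: "real \<Rightarrow> nat \<Rightarrow> real" where "up4 C s = (if s \<in> sites then C * (4 - real s) else 0)"
definition dn4 :: "real \<Rightarrow> nat \<Rightarrow> real" where "dn4 C s = (if s \<in> sites then - C * (4 - real s) else 0)"

lemma lin_Theta:
  assumes "C > 0" "\<And>s. s \<in> sites \<Longrightarrow> f s = c * (real s - k)" "\<bar>c\<bar> = C" "\<And>s. s \<notin> sites \<Longrightarrow> f s = 0"
  shows "f \<in> Theta C"
  unfolding Theta_def
proof (intro CollectI conjI ballI allI impI)
  fix s t assume st: "s \<in> sites" "t \<in> sites"
  have "f s - f t = c * (real s - real t)" using assms(2)[OF st(1)] assms(2)[OF st(2)] by (simp add: algebra_simps)
  then have "\<bar>f s - f t\<bar> = \<bar>c * (real s - real t)\<bar>" by simp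
  also have "\<dots> = C * \<bar>real s - real t\<bar>" using assms(3) by (simp add: abs_mult)
  finally show "\<bar>f s - f t\<bar> \<le> C * \<bar>real s - real t\<bar>" by simp
qed (use assms(4) in auto)

lemma purp_ge:
  assumes C: "C > 0" and d: "d \<in> purposive_designs"
  shows "ereal (3*C/4) \<le> worst_case_regret C d"
proof -
  obtain p T where dpt: "d = (p, T)" by (cases d)
  obtain S where S: "S \<in> feasible_sets" and pS: "p = return_pmf S"
    using d dpt by (auto simp: purposive_designs_def)
  show ?thesis
  proof (cases "S = {4}")
    case False
    then have S1: "S \<subseteq> {1}" using S by (auto simp: feasible_sets_def)
    have "obs S (dn1 C) = obs S (up1 C)"
      by (rule obs_eq[OF S]) (use S1 in \<open>auto simp: up1_def dn1_def sites_def\<close>)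
    then have "regret (up1 C) (T S (obs S (up1 C))) + regret (dn1 C) (T S (obs S (dn1 C))) = 3*C/2"
      using C by (simp add: regret_def up1_def dn1_def sites_def algebra_simps)
    then have "measure_pmf.expectation (fst d) (\<lambda>S. regret (up1 C) (snd d S (obs S (up1 C))))
      + measure_pmf.expectation (fst d) (\<lambda>S. regret (dn1 C) (snd d S (obs S (dn1 C)))) \<ge> 2 * (3*C/4)"
      using dpt pS by simp
    then show ?thesis
    proof -
      have a: "up1 C \<in> Theta C" by (rule lin_Theta[of C _ C 1]) (use C in \<open>auto simp: up1_def algebra_simps\<close>)
      have b: "dn1 C \<in> Theta C" by (rule lin_Theta[of C _ "-C" 1]) (use C in \<open>auto simp: dn1_def algebra_simps\<close>)
      show ?thesis by (rule worst_ge[OF a b]) fact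
    qed
  next
    case True
    have "obs S (dn4 C) = obs S (up4 C)"
      by (rule obs_eq[OF S]) (use True in \<open>auto simp: up4_def dn4_def sites_def\<close>)
    then have "regret (up4 C) (T S (obs S (up4 C))) + regret (dn4 C) (T S (obs S (dn4 C))) = 3*C/2"
      using C by (simp add: regret_def up4_def dn4_def sites_def algebra_simps)
    then have "measure_pmf.expectation (fst d) (\<lambda>S. regret (up4 C) (snd d S (obs S (up4 C))))
      + measure_pmf.expectation (fst d) (\<lambda>S. regret (dn4 C) (snd d S (obs S (dn4 C)))) \<ge> 2 * (3*C/4)"
      using dpt pS by simp
    then show ?thesis
    proof -
      have a: "up4 C \<in> Theta C" by (rule lin_Theta[of C _ "-C" 4]) (use C in \<open>auto simp: up4_def algebra_simps\<close>)
      have b: "dn4 C \<in> Theta C" by (rule lin_Theta[of C _ C 4]) (use C in \<open>auto simp: dn4_def algebra_simps\<close>)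
      show ?thesis by (rule worst_ge[OF a b]) fact
    qed
  qed
qed


theorem lemmaB1:
  fixes C :: real
  assumes "C > 0"
  shows "(INF d\<in>randomized_designs. worst_case_regret C d) = ereal (C / 2)
       \<and> (\<exists>d\<in>randomized_designs. worst_case_regret C d = ereal (C / 2))
       \<and> (INF d\<in>purposive_designs. worst_case_regret C d) = ereal (3 * C / 4)
       \<and> (\<exists>d\<in>purposive_designs. worst_case_regret C d = ereal (3 * C / 4))"
proof -
  have r: "worst_case_regret C (pmf_of_set {{1},{4}}, Trand C) = ereal (C/2)"
    using worst_rand_le[OF assms] rand_ge[OF assms drand_in] by (rule antisym)
  have p: "worst_case_regret C (return_pmf {1}, Tpurp C) = ereal (3*C/4)"
    using worst_purp_le[OF assms] purp_ge[OF assms dpurp_in] by (rule antisym)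
  have ri: "(INF d\<in>randomized_designs. worst_case_regret C d) = ereal (C / 2)"
  proof (rule antisym)
    show "(INF d\<in>randomized_designs. worst_case_regret C d) \<le> ereal (C / 2)"
      using r drand_in by (metis INF_lower)
    show "ereal (C / 2) \<le> (INF d\<in>randomized_designs. worst_case_regret C d)"
      using rand_ge[OF assms] by (rule INF_greatest)
  qed
  have pi: "(INF d\<in>purposive_designs. worst_case_regret C d) = ereal (3 * C / 4)"
  proof (rule antisym)
    show "(INF d\<in>purposive_designs. worst_case_regret C d) \<le> ereal (3 * C / 4)"
      using p dpurp_in by (metis INF_lower)
    show "ereal (3 * C / 4) \<le> (INF d\<in>purposive_designs. worst_case_regret C d)"
      using purp_ge[OF assms] by (rule INF_greatest)
  qed
  show ?thesis using ri pi r p drand_in dpurp_in by blast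
qed


end
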